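(* Let $p$ be a positive integer, $H$ a graph, $T$ a complete rooted ternary tree and $V\subseteq V(T(H))$ with $OC(T,V)\subsetneq V(T)$. Let $T_1,\dots,T_q$ be a minimal sequence of largest subtrees of $T$ with respect to $V$ lacking $p$. Let $T^*$ be the tree obtained from $T$ by deleting the vertices of $T_q$, and $V^*=V\cap V(T^*(H))$. Then $OC(T^*,V^* )\subsetneq V(T^* )$.
   Context: Complete rooted ternary tree: rooted tree, all root-leaf paths of equal length, every non-leaf vertex has exactly 3 children. Graph $T(H)$: for $V(H)=\{1,\dots,m\}$, vertices $v^i$ ($v\in V(T)$), each $\{v^1,\dots,v^m\}$ spanning a copy $H^v$ of $H$, plus edges $u^iv^i$ for $uv\in E(T)$; for a subtree $T'$, $T'(H)$ is the subgraph induced by the copies $H^v$, $v\in V(T')$. $OC(T,V)=\{u\in V(T): V(H^u)\cap V\neq\emptyset\}$. An immediate subtree of $T$ consists of a child of the root and all its descendants; it is largest w.r.t. $V$ if $|OC(T,V)\cap V(T')|$ is maximum among immediate subtrees. A sequence of largest subtrees: $T_1=T$, $V_1=V$, $T_{i+1}$ a largest immediate subtree of $T_i$ w.r.t. $V_i$, $V_{i+1}=V_i\cap V(T_{i+1}(H))$. It is minimal lacking $p$ if $|OC(T_1,V_1)|-|OC(T_q,V_q)|\geq p$ and $|OC(T_1,V_1)|-|OC(T_{q-1},V_{q-1})|<p$. *)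

theory Defs
  imports Main
begin

(* Canonical complete rooted ternary tree of depth d: nodes are words over {0,1,2}
   of length at most d; the root is [], the children of v are v@[0], v@[1], v@[2]. *)
definition tern_tree :: "nat \<Rightarrow> nat list set" where
  "tern_tree d = {v. set v \<subseteq> {0,1,2} \<and> length v \<le> d}"

definition subtree_at :: "nat \<Rightarrow> nat list \<Rightarrow> nat list set" where
  "subtree_at d w = {v \<in> tern_tree d. \<exists>u. v = w @ u}"

(* H is a graph with V(H) = {1..m}; vertex v^i of T(H) is the pair (v,i).
   Vertex set of T'(H) for a set S of tree vertices. *)
definition TH_verts :: "nat list set \<Rightarrow> nat \<Rightarrow> (nat list \<times> nat) set" where
  "TH_verts S m = S \<times> {1..m}"

definition TH_edge :: "nat list set \<Rightarrow> nat \<Rightarrow> (nat \<Rightarrow> nat \<Rightarrow> bool)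
    \<Rightarrow> (nat list \<times> nat) \<Rightarrow> (nat list \<times> nat) \<Rightarrow> bool" where
  "TH_edge S m EH x y \<longleftrightarrow> x \<in> TH_verts S m \<and> y \<in> TH_verts S m \<and>
     ((fst x = fst y \<and> EH (snd x) (snd y)) \<or>
      (snd x = snd y \<and> (\<exists>c\<in>{0,1,2::nat}. fst y = fst x @ [c] \<or> fst x = fst y @ [c])))"

definition OC :: "nat \<Rightarrow> nat list set \<Rightarrow> (nat list \<times> nat) set \<Rightarrow> nat list set" where
  "OC m S V = {u \<in> S. \<exists>i\<in>{1..m}. (u, i) \<in> V}"

(* T_i is the subtree rooted at w i, V_i = Vs i, for i = 1..q *)
definition largest_seq :: "nat \<Rightarrow> nat \<Rightarrow> (nat list \<times> nat) set \<Rightarrow> nat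
    \<Rightarrow> (nat \<Rightarrow> nat list) \<Rightarrow> (nat \<Rightarrow> (nat list \<times> nat) set) \<Rightarrow> bool" where
  "largest_seq d m V q w Vs \<longleftrightarrow> 1 \<le> q \<and> w 1 = [] \<and> Vs 1 = V \<and>
     (\<forall>i. 1 \<le> i \<and> i < q \<longrightarrow>
        length (w i) < d \<and>
        (\<exists>c\<in>{0,1,2}. w (Suc i) = w i @ [c]) \<and>
        (\<forall>c\<in>{0,1,2}. card (OC m (subtree_at d (w i)) (Vs i) \<inter> subtree_at d (w i @ [c]))
                      \<le> card (OC m (subtree_at d (w i)) (Vs i) \<inter> subtree_at d (w (Suc i)))) \<and>
        Vs (Suc i) = Vs i \<inter> TH_verts (subtree_at d (w (Suc i))) m)"

definition minimal_lacking :: "nat \<Rightarrow> nat \<Rightarrow> (nat list \<times> nat) set \<Rightarrow> nat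
    \<Rightarrow> (nat \<Rightarrow> nat list) \<Rightarrow> (nat \<Rightarrow> (nat list \<times> nat) set) \<Rightarrow> nat \<Rightarrow> bool" where
  "minimal_lacking d m V q w Vs p \<longleftrightarrow> largest_seq d m V q w Vs \<and>
     int (card (OC m (subtree_at d (w 1)) (Vs 1))) - int (card (OC m (subtree_at d (w q)) (Vs q))) \<ge> int p \<and>
     int (card (OC m (subtree_at d (w 1)) (Vs 1))) - int (card (OC m (subtree_at d (w (q - 1))) (Vs (q - 1)))) < int p"

end

theory Submission
  imports Defs
begin

lemma fin_tern: "finite (tern_tree d)"
proof -
  have "tern_tree d = {xs. set xs \<subseteq> {0,1,2::nat} \<and> length xs \<le> d}"
    by (simp add: tern_tree_def)
  thus ?thesis by (simp add: finite_lists_length_le)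
qed

lemma fin_sub: "finite (subtree_at d w)"
  using fin_tern unfolding subtree_at_def by auto

lemma sub_child: "subtree_at d (w @ [c]) \<subseteq> subtree_at d w"
  unfolding subtree_at_def by auto

lemma card_child_le:
  assumes "c' \<in> {0,1,2}"
  shows "card (subtree_at d (w @ [c])) \<le> card (subtree_at d (w @ [c']))"
proof (rule card_inj_on_le[where f="\<lambda>v. (w @ [c']) @ drop (Suc (length w)) v"])
  show "inj_on (\<lambda>v. (w @ [c']) @ drop (Suc (length w)) v) (subtree_at d (w @ [c]))"
    unfolding subtree_at_def inj_on_def by auto
  show "(\<lambda>v. (w @ [c']) @ drop (Suc (length w)) v) ` subtree_at d (w @ [c]) \<subseteq> subtree_at d (w @ [c'])"
    using assms unfolding subtree_at_def tern_tree_def by auto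
  show "finite (subtree_at d (w @ [c']))" by (rule fin_sub)
qed

theorem lemma6:
  fixes p d m q :: nat and EH :: "nat \<Rightarrow> nat \<Rightarrow> bool"
    and V :: "(nat list \<times> nat) set"
    and w :: "nat \<Rightarrow> nat list" and Vs :: "nat \<Rightarrow> (nat list \<times> nat) set"
  assumes "p > 0"
    and "\<And>a b. EH a b \<Longrightarrow> a \<in> {1..m} \<and> b \<in> {1..m} \<and> a \<noteq> b \<and> EH b a"
    and "V \<subseteq> TH_verts (tern_tree d) m"
    and "OC m (tern_tree d) V \<subset> tern_tree d"
    and "minimal_lacking d m V q w Vs p"
  shows "OC m (tern_tree d - subtree_at d (w q))
            (V \<inter> TH_verts (tern_tree d - subtree_at d (w q)) m)
          \<subset> tern_tree d - subtree_at d (w q)"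
proof -
  have ls: "largest_seq d m V q w Vs" using assms(5) unfolding minimal_lacking_def by simp
  have q2: "q \<ge> 2"
  proof (rule ccontr)
    assume "\<not> q \<ge> 2"
    with ls have "q = 1" unfolding largest_seq_def by auto
    with assms(5) assms(1) show False unfolding minimal_lacking_def by auto
  qed
  have VsI: "Suc k \<le> q \<Longrightarrow> Vs (Suc k) = V \<inter> TH_verts (subtree_at d (w (Suc k))) m" for k
  proof (induction k)
    case 0
    have "subtree_at d [] = tern_tree d" unfolding subtree_at_def by auto
    then show ?case using ls assms(3) unfolding largest_seq_def by auto
  next
    case (Suc k)
    from ls Suc.prems have st: "(\<exists>c\<in>{0,1,2}. w (Suc (Suc k)) = w (Suc k) @ [c])"
      and e: "Vs (Suc (Suc k)) = Vs (Suc k) \<inter> TH_verts (subtree_at d (w (Suc (Suc k)))) m"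
      unfolding largest_seq_def by auto
    from st have "subtree_at d (w (Suc (Suc k))) \<subseteq> subtree_at d (w (Suc k))"
      by (elim bexE) (simp add: sub_child)
    then show ?case using e Suc by (auto simp: TH_verts_def)
  qed
  define i where "i = q - 1"
  have i1: "1 \<le> i" "i < q" and qi: "q = Suc i" using q2 by (auto simp: i_def)
  have Vsi: "Vs i = V \<inter> TH_verts (subtree_at d (w i)) m"
    using VsI[of "i - 1"] i1 by simp
  from ls i1 obtain c0 where c0: "c0 \<in> {0,1,2}" "w q = w i @ [c0]"
    and big: "\<forall>c\<in>{0,1,2}. card (OC m (subtree_at d (w i)) (Vs i) \<inter> subtree_at d (w i @ [c]))
                      \<le> card (OC m (subtree_at d (w i)) (Vs i) \<inter> subtree_at d (w q))"
    unfolding largest_seq_def qi by auto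
  obtain c where c: "c \<in> {0,1,2::nat}" "c \<noteq> c0" proof
  show "(if c0 = 0 then 1 else 0) \<in> {0,1,2::nat}" by simp
  show "(if c0 = 0 then 1 else 0) \<noteq> c0" by simp
qed
  let ?S = "tern_tree d - subtree_at d (w q)"
  have sub: "OC m ?S (V \<inter> TH_verts ?S m) \<subseteq> ?S" unfolding OC_def by auto
  show ?thesis
  proof (rule ccontr)
    assume "\<not> ?thesis"
    with sub have full: "\<forall>u\<in>?S. \<exists>j\<in>{1..m}. (u, j) \<in> V"
      unfolding OC_def by auto
    let ?A = "OC m (subtree_at d (w i)) (Vs i)"
    have disj: "subtree_at d (w i @ [c]) \<subseteq> ?S"
      using c c0 unfolding subtree_at_def by auto
    have "subtree_at d (w i @ [c]) \<subseteq> ?A"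
    proof
      fix u assume u: "u \<in> subtree_at d (w i @ [c])"
      with disj full obtain j where "j \<in> {1..m}" "(u, j) \<in> V" by blast
      moreover have "u \<in> subtree_at d (w i)" using u sub_child by blast
      ultimately show "u \<in> ?A" unfolding OC_def Vsi TH_verts_def by auto
    qed
    hence "?A \<inter> subtree_at d (w i @ [c]) = subtree_at d (w i @ [c])" by blast
    moreover have "card (?A \<inter> subtree_at d (w i @ [c])) \<le> card (?A \<inter> subtree_at d (w q))"
      using big c(1) by blast
    ultimately have "card (subtree_at d (w i @ [c])) \<le> card (?A \<inter> subtree_at d (w q))"
      by simp
    moreover have "card (subtree_at d (w q)) \<le> card (subtree_at d (w i @ [c]))"
      using card_child_le[OF c(1)] c0 by simp
    ultimately have "card (subtree_at d (w q)) \<le> card (?A \<inter> subtree_at d (w q))" by simp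
    hence "?A \<inter> subtree_at d (w q) = subtree_at d (w q)"
      using card_seteq[OF fin_sub, of "?A \<inter> subtree_at d (w q)" d "w q"] by blast
    hence fq: "\<forall>u\<in>subtree_at d (w q). \<exists>j\<in>{1..m}. (u, j) \<in> V"
      unfolding OC_def Vsi by auto
    have "tern_tree d \<subseteq> OC m (tern_tree d) V"
      using full fq unfolding OC_def by auto
    with assms(4) show False by auto
  qed
qed

end
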